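(* Let $\mathbb{M}$ be a Zariski-like structure, and suppose $a=(a_0,\dots,a_{n-1})$ and $b=(b_0,\dots,b_{n-1})$ are tuples from $\mathbb{M}$ such that $a\to b$ is a specialization, $a_0\neq a_1$ and $b_0=b_1$. Then there is some $c=(c_0,\dots,c_{n-1})$ such that $a\to c\to b$, $\mathrm{rk}(a\to c)\le1$ and $c_0=c_1$.
   Context: $\mathbb{M}$ is a quasiminimal pregeometry structure (countable language; pregeometry cl determined by quantifier-free types; infinite-dimensional; countable closures of finite sets; unique generic types over countable closed sets; $\aleph_0$-homogeneity over countable closed sets and $\emptyset$) viewed as a monster model. $\dim$ is w.r.t. bcl (= cl), $\mathrm{bcl}(A)$ being the set of elements with fewer than $|\mathbb{M}|$ images under $\mathrm{Aut}(\mathbb{M}/A)$; $A\downarrow_B C$ iff $\dim(a/BC)=\dim(a/B)$ for finite $a$ from $A$; a tuple is generic in a set if its dimension is maximal there; Galois type $t^g(b/A)$ is the orbit under $\mathrm{Aut}(\mathbb{M}/A)$; Galois definable over $A$ = invariant under $\mathrm{Aut}(\mathbb{M}/A)$. Given a collection $\mathcal{C}$ of subsets of the powers of $\mathbb{M}$, a map $a_i\mapsto b_i$ (written $a\to b$) is a specialization if for every $C\in\mathcal{C}$ and $a_{i_1},\dots,a_{i_k}$, $(a_{i_1},\dots,a_{i_k})\in C$ implies $(b_{i_1},\dots,b_{i_k})\in C$; $\mathrm{rk}(a\to b)=\dim(a)-\dim(b)$ for finite tuples. Strongly regular: isomorphisms (Galois-type preserving maps), specializations $a\to a'$ with $a$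 generic over $\emptyset$, and $aa'\to bb'$ with $a\downarrow a'$ and $a\to b$, $a'\to b'$ strongly regular. Strongly good: strongly regular ones, and $(a_1,a_2,a_3)\to(a_1',a_2',a_3')$ whenever $(a_1,a_2)\to(a_1',a_2')$ is strongly good, $a_1\to a_1'$ is an isomorphism and $a_3\in\mathrm{cl}(a_1)$. $\mathbb{M}$ is Zariski-like if there is a countable collection $\mathcal{C}$ of sets $C\subseteq\mathbb{M}^n$ (irreducible sets) with (specializations w.r.t. $\mathcal{C}$): (1) each $C$ Galois definable over $\emptyset$; (2) every tuple is generic in some $C\in\mathcal{C}$; (3) generic elements of $C$ have the same Galois type over $\emptyset$; (4) if $a\in C$ generic and $a\in D\in\mathcal{C}$ then $C\subseteq D$; (5) if $(a,b)\in C_1$ generic, $a$ generic in $C_2$, $(a',b')\in C_1$ then $a'\in C_2$; (6) closed under coordinate permutations; (7) if $a\to a'$ is strongly good of rank $\le1$, specializations $ab\to a'b'$, $ac\to a'c'$ amalgamate: some $b^*\downarrow_a c$ with $t^g(b^*/a)=t^g(b/a)$ and $ab^*c\to a'b'c'$; (8) if $(a_i)_{i\in I}$ is independent and indiscernible over $b$, $(a_i')$ indiscernible over $b'$, $a_ib\to a_i'b'$ for all $i$, and $b\to b'$ strongly good of rank $\le1$, then $(ba_i)_{i\in I}\to(b'a_i')_{i\in I}$ (indiscernible: every permutation extends to an automorphism fixing the base); (9) if $(a_i)_{i<\kappa}\to(b_i)_{i<\kappa}$, $a_0\ne a_1$, $b_0=b_1$, and $S\subseteq\mathcal{P}_{<\omega}(\kappa)$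 is unbounded and directed with $0,1\in X$ for all $X\in S$ and such that for $X\subseteq Y$ in $S$ and every $(c_i)_{i\in Y}$ with $c_0=c_1$, $(a_i)_Y\to(c_i)_Y\to(b_i)_Y$ and $\mathrm{rk}((a_i)_Y\to(c_i)_Y)\le1$ one has $\mathrm{rk}((a_i)_X\to(c_i)_X)\le1$, then there are $(c_i)_{i<\kappa}$ with $(a_i)\to(c_i)\to(b_i)$, $c_0=c_1$ and $\mathrm{rk}((a_i)_X\to(c_i)_X)\le1$ for all $X\in S$. *)

theory Defs
  imports Main "HOL-Library.Countable_Set"
begin

text \<open>
  The structure M is modelled on the universe UNIV of a type 'a.
  Its countable language is given as a nat-indexed family of relations
  Rel i :: 'a list => bool (relations of arbitrary finite arity);
  cl :: 'a set => 'a set is the pregeometry.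
\<close>

definition aut :: "(nat \<Rightarrow> 'a list \<Rightarrow> bool) \<Rightarrow> ('a \<Rightarrow> 'a) \<Rightarrow> bool" where
  "aut Rel \<sigma> \<longleftrightarrow> bij \<sigma> \<and> (\<forall>i xs. Rel i xs \<longleftrightarrow> Rel i (map \<sigma> xs))"

definition partial_iso :: "(nat \<Rightarrow> 'a list \<Rightarrow> bool) \<Rightarrow> 'a set \<Rightarrow> ('a \<Rightarrow> 'a) \<Rightarrow> bool" where
  "partial_iso Rel D g \<longleftrightarrow> inj_on g D \<and>
     (\<forall>i xs. set xs \<subseteq> D \<longrightarrow> (Rel i xs \<longleftrightarrow> Rel i (map g xs)))"

definition qftp_eq :: "(nat \<Rightarrow> 'a list \<Rightarrow> bool) \<Rightarrow> 'a list \<Rightarrow> 'a list \<Rightarrow> bool" where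
  "qftp_eq Rel xs ys \<longleftrightarrow> length xs = length ys \<and>
     (\<exists>g. partial_iso Rel (set xs) g \<and> map g xs = ys)"

definition gal_eq :: "(nat \<Rightarrow> 'a list \<Rightarrow> bool) \<Rightarrow> 'a set \<Rightarrow> 'a list \<Rightarrow> 'a list \<Rightarrow> bool" where
  "gal_eq Rel A xs ys \<longleftrightarrow> (\<exists>\<sigma>. aut Rel \<sigma> \<and> (\<forall>z\<in>A. \<sigma> z = z) \<and> map \<sigma> xs = ys)"

text \<open>bcl(A): elements with fewer than |M| images under Aut(M/A)
  (i.e. there is no injection of M into the orbit).\<close>
definition bcl :: "(nat \<Rightarrow> 'a list \<Rightarrow> bool) \<Rightarrow> 'a set \<Rightarrow> 'a set" where
  "bcl Rel A = {x. \<not> (\<exists>f :: 'a \<Rightarrow> 'a. inj f \<and>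
      range f \<subseteq> {\<sigma> x | \<sigma>. aut Rel \<sigma> \<and> (\<forall>z\<in>A. \<sigma> z = z)})}"

definition pregeometry :: "('a set \<Rightarrow> 'a set) \<Rightarrow> bool" where
  "pregeometry cl \<longleftrightarrow>
     (\<forall>A. A \<subseteq> cl A) \<and>
     (\<forall>A B. A \<subseteq> B \<longrightarrow> cl A \<subseteq> cl B) \<and>
     (\<forall>A. cl (cl A) = cl A) \<and>
     (\<forall>A x. x \<in> cl A \<longrightarrow> (\<exists>F. F \<subseteq> A \<and> finite F \<and> x \<in> cl F)) \<and>
     (\<forall>A x y. x \<in> cl (insert y A) - cl A \<longrightarrow> y \<in> cl (insert x A))"

definition quasiminimal_pregeometry_structure ::
  "(nat \<Rightarrow> 'a list \<Rightarrow> bool) \<Rightarrow> ('a set \<Rightarrow> 'a set) \<Rightarrow> bool" where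
  "quasiminimal_pregeometry_structure Rel cl \<longleftrightarrow>
     pregeometry cl \<and>
     \<comment> \<open>cl is determined by quantifier-free types\<close>
     (\<forall>a a' x x'. qftp_eq Rel (x # a) (x' # a') \<longrightarrow>
        (x \<in> cl (set a) \<longleftrightarrow> x' \<in> cl (set a'))) \<and>
     \<comment> \<open>infinite dimension\<close>
     (\<not> (\<exists>X. finite X \<and> cl X = UNIV)) \<and>
     \<comment> \<open>countable closures of finite sets\<close>
     (\<forall>A. finite A \<longrightarrow> countable (cl A)) \<and>
     \<comment> \<open>uniqueness of generic types over countable closed sets\<close>
     (\<forall>H g x x'. countable H \<and> cl H = H \<and> cl (g ` H) = g ` H \<and>
        partial_iso Rel H g \<and> x \<notin> H \<and> x' \<notin> g ` H \<longrightarrow>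
        partial_iso Rel (insert x H) (g(x := x'))) \<and>
     \<comment> \<open>aleph0-homogeneity over countable closed sets and over the empty set\<close>
     (\<forall>H g b x. countable H \<and> (cl H = H \<or> H = {}) \<and> (cl (g ` H) = g ` H \<or> H = {}) \<and>
        partial_iso Rel (H \<union> set b) g \<and> x \<in> cl (H \<union> set b) \<longrightarrow>
        (\<exists>g'. partial_iso Rel (insert x (H \<union> set b)) g' \<and>
              (\<forall>z \<in> H \<union> set b. g' z = g z)))"

text \<open>Monster-model convention: bcl = cl on small sets (|A| < |M|).\<close>
definition monster_bcl_eq_cl :: "(nat \<Rightarrow> 'a list \<Rightarrow> bool) \<Rightarrow> ('a set \<Rightarrow> 'a set) \<Rightarrow> bool" where
  "monster_bcl_eq_cl Rel cl \<longleftrightarrow>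
     (\<forall>A. \<not> (\<exists>f :: 'a \<Rightarrow> 'a. inj f \<and> range f \<subseteq> A) \<longrightarrow> bcl Rel A = cl A)"

definition dimS :: "('a set \<Rightarrow> 'a set) \<Rightarrow> 'a set \<Rightarrow> 'a set \<Rightarrow> nat" where
  "dimS cl A B = (LEAST k. \<exists>X. X \<subseteq> A \<and> finite X \<and> card X = k \<and> A \<subseteq> cl (X \<union> B))"

definition dimt :: "('a set \<Rightarrow> 'a set) \<Rightarrow> 'a list \<Rightarrow> 'a set \<Rightarrow> nat" where
  "dimt cl a B = dimS cl (set a) B"

abbreviation dim0 :: "('a set \<Rightarrow> 'a set) \<Rightarrow> 'a list \<Rightarrow> nat" where
  "dim0 cl a \<equiv> dimt cl a {}"

definition indep :: "('a set \<Rightarrow> 'a set) \<Rightarrow> 'a set \<Rightarrow> 'a set \<Rightarrow> 'a set \<Rightarrow> bool" where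
  "indep cl A B C \<longleftrightarrow> (\<forall>a. set a \<subseteq> A \<longrightarrow> dimt cl a (B \<union> C) = dimt cl a B)"

definition generic_in :: "('a set \<Rightarrow> 'a set) \<Rightarrow> 'a list set \<Rightarrow> 'a list \<Rightarrow> bool" where
  "generic_in cl C a \<longleftrightarrow> a \<in> C \<and> (\<forall>x\<in>C. dim0 cl x \<le> dim0 cl a)"

definition spec :: "'a list set set \<Rightarrow> 'j set \<Rightarrow> ('j \<Rightarrow> 'a) \<Rightarrow> ('j \<Rightarrow> 'a) \<Rightarrow> bool" where
  "spec CC I f g \<longleftrightarrow>
     (\<forall>D\<in>CC. \<forall>is. set is \<subseteq> I \<longrightarrow> map f is \<in> D \<longrightarrow> map g is \<in> D)"

definition spec_list :: "'a list set set \<Rightarrow> 'a list \<Rightarrow> 'a list \<Rightarrow> bool" where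
  "spec_list CC a b \<longleftrightarrow> length a = length b \<and> spec CC {..<length a} ((!) a) ((!) b)"

definition rk :: "('a set \<Rightarrow> 'a set) \<Rightarrow> 'a list \<Rightarrow> 'a list \<Rightarrow> int" where
  "rk cl a b = int (dim0 cl a) - int (dim0 cl b)"

definition rk_fam :: "('a set \<Rightarrow> 'a set) \<Rightarrow> 'j set \<Rightarrow> ('j \<Rightarrow> 'a) \<Rightarrow> ('j \<Rightarrow> 'a) \<Rightarrow> int" where
  "rk_fam cl X f g = int (dimS cl (f ` X) {}) - int (dimS cl (g ` X) {})"

inductive strongly_regular ::
  "(nat \<Rightarrow> 'a list \<Rightarrow> bool) \<Rightarrow> ('a set \<Rightarrow> 'a set) \<Rightarrow> 'a list set set \<Rightarrow> 'a list \<Rightarrow> 'a list \<Rightarrow> bool"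
  for Rel cl CC where
  sr_iso: "spec_list CC a b \<Longrightarrow> gal_eq Rel {} a b \<Longrightarrow> strongly_regular Rel cl CC a b"
| sr_generic: "spec_list CC a b \<Longrightarrow> dim0 cl a = length a \<Longrightarrow> strongly_regular Rel cl CC a b"
| sr_concat: "spec_list CC (a @ a') (b @ b') \<Longrightarrow> indep cl (set a) {} (set a') \<Longrightarrow>
    strongly_regular Rel cl CC a b \<Longrightarrow> strongly_regular Rel cl CC a' b' \<Longrightarrow>
    strongly_regular Rel cl CC (a @ a') (b @ b')"

inductive strongly_good ::
  "(nat \<Rightarrow> 'a list \<Rightarrow> bool) \<Rightarrow> ('a set \<Rightarrow> 'a set) \<Rightarrow> 'a list set set \<Rightarrow> 'a list \<Rightarrow> 'a list \<Rightarrow> bool"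
  for Rel cl CC where
  sg_reg: "strongly_regular Rel cl CC a b \<Longrightarrow> strongly_good Rel cl CC a b"
| sg_ext: "strongly_good Rel cl CC (a1 @ a2) (a1' @ a2') \<Longrightarrow> gal_eq Rel {} a1 a1' \<Longrightarrow>
    set a3 \<subseteq> cl (set a1) \<Longrightarrow> spec_list CC (a1 @ a2 @ a3) (a1' @ a2' @ a3') \<Longrightarrow>
    strongly_good Rel cl CC (a1 @ a2 @ a3) (a1' @ a2' @ a3')"

text \<open>Flattening of the family (b a_i)_{i in I} into one indexed tuple.\<close>
definition fam_index :: "'a list \<Rightarrow> 'i set \<Rightarrow> ('i \<Rightarrow> 'a list) \<Rightarrow> (nat + ('i \<times> nat)) set" where
  "fam_index b I A = Inl ` {..<length b} \<union> {Inr (i, j) | i j. i \<in> I \<and> j < length (A i)}"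

definition fam_val :: "'a list \<Rightarrow> ('i \<Rightarrow> 'a list) \<Rightarrow> nat + ('i \<times> nat) \<Rightarrow> 'a" where
  "fam_val b A k = (case k of Inl m \<Rightarrow> b ! m | Inr (i, j) \<Rightarrow> A i ! j)"

definition indiscernible ::
  "(nat \<Rightarrow> 'a list \<Rightarrow> bool) \<Rightarrow> 'i set \<Rightarrow> ('i \<Rightarrow> 'a list) \<Rightarrow> 'a list \<Rightarrow> bool" where
  "indiscernible Rel I A b \<longleftrightarrow>
     (\<forall>\<pi>. bij_betw \<pi> I I \<longrightarrow>
        (\<exists>\<sigma>. aut Rel \<sigma> \<and> (\<forall>z\<in>set b. \<sigma> z = z) \<and> (\<forall>i\<in>I. map \<sigma> (A i) = A (\<pi> i))))"

definition indep_family ::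
  "('a set \<Rightarrow> 'a set) \<Rightarrow> 'i set \<Rightarrow> ('i \<Rightarrow> 'a list) \<Rightarrow> 'a list \<Rightarrow> bool" where
  "indep_family cl I A b \<longleftrightarrow>
     (\<forall>i\<in>I. indep cl (set (A i)) (set b) (\<Union>j\<in>I - {i}. set (A j)))"

definition zariski_like ::
  "(nat \<Rightarrow> 'a list \<Rightarrow> bool) \<Rightarrow> ('a set \<Rightarrow> 'a set) \<Rightarrow> 'a list set set \<Rightarrow> bool" where
  "zariski_like Rel cl CC \<longleftrightarrow>
     quasiminimal_pregeometry_structure Rel cl \<and> monster_bcl_eq_cl Rel cl \<and>
     countable CC \<and>
     (\<forall>C\<in>CC. \<exists>n. \<forall>x\<in>C. length x = n) \<and>
     \<comment> \<open>(1)\<close>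
     (\<forall>C\<in>CC. \<forall>\<sigma> x. aut Rel \<sigma> \<longrightarrow> (x \<in> C \<longleftrightarrow> map \<sigma> x \<in> C)) \<and>
     \<comment> \<open>(2)\<close>
     (\<forall>a. \<exists>C\<in>CC. generic_in cl C a) \<and>
     \<comment> \<open>(3)\<close>
     (\<forall>C\<in>CC. \<forall>a a'. generic_in cl C a \<and> generic_in cl C a' \<longrightarrow> gal_eq Rel {} a a') \<and>
     \<comment> \<open>(4)\<close>
     (\<forall>C\<in>CC. \<forall>D\<in>CC. \<forall>a. generic_in cl C a \<and> a \<in> D \<longrightarrow> C \<subseteq> D) \<and>
     \<comment> \<open>(5)\<close>
     (\<forall>C1\<in>CC. \<forall>C2\<in>CC. \<forall>a b a' b'.
        generic_in cl C1 (a @ b) \<and> generic_in cl C2 a \<and> a' @ b' \<in> C1 \<and> length a' = length a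
        \<longrightarrow> a' \<in> C2) \<and>
     \<comment> \<open>(6)\<close>
     (\<forall>C\<in>CC. \<forall>n p. (\<forall>x\<in>C. length x = n) \<and> bij_betw p {..<n} {..<n} \<longrightarrow>
        (\<lambda>x. map (\<lambda>i. x ! p i) [0..<n]) ` C \<in> CC) \<and>
     \<comment> \<open>(7)\<close>
     (\<forall>a a' b b' c c'.
        strongly_good Rel cl CC a a' \<and> rk cl a a' \<le> 1 \<and>
        spec_list CC (a @ b) (a' @ b') \<and> length b = length b' \<and>
        spec_list CC (a @ c) (a' @ c') \<and> length c = length c' \<longrightarrow>
        (\<exists>bs. indep cl (set bs) (set a) (set c) \<and> gal_eq Rel (set a) b bs \<and>
              spec_list CC (a @ bs @ c) (a' @ b' @ c'))) \<and>
     \<comment> \<open>(8)\<close>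
     (\<forall>(I :: 'a set) A A' b b'.
        indep_family cl I A b \<and> indiscernible Rel I A b \<and> indiscernible Rel I A' b' \<and>
        (\<forall>i\<in>I. spec_list CC (A i @ b) (A' i @ b') \<and> length (A i) = length (A' i)) \<and>
        strongly_good Rel cl CC b b' \<and> rk cl b b' \<le> 1 \<longrightarrow>
        spec CC (fam_index b I A) (fam_val b A) (fam_val b' A')) \<and>
     \<comment> \<open>(9)\<close>
     (\<forall>(I :: 'a set) i0 i1 (f :: 'a \<Rightarrow> 'a) g S.
        i0 \<in> I \<and> i1 \<in> I \<and> spec CC I f g \<and> f i0 \<noteq> f i1 \<and> g i0 = g i1 \<and>
        S \<subseteq> {X. X \<subseteq> I \<and> finite X} \<and>
        (\<forall>X. X \<subseteq> I \<and> finite X \<longrightarrow> (\<exists>Y\<in>S. X \<subseteq> Y)) \<and>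
        (\<forall>X\<in>S. \<forall>Y\<in>S. \<exists>Z\<in>S. X \<union> Y \<subseteq> Z) \<and>
        (\<forall>X\<in>S. i0 \<in> X \<and> i1 \<in> X) \<and>
        (\<forall>X\<in>S. \<forall>Y\<in>S. X \<subseteq> Y \<longrightarrow>
           (\<forall>h. h i0 = h i1 \<and> spec CC Y f h \<and> spec CC Y h g \<and> rk_fam cl Y f h \<le> 1
                \<longrightarrow> rk_fam cl X f h \<le> 1))
        \<longrightarrow> (\<exists>h. spec CC I f h \<and> spec CC I h g \<and> h i0 = h i1 \<and>
                 (\<forall>X\<in>S. rk_fam cl X f h \<le> 1)))"

end

theory Submission
  imports Defs
begin

lemma inf_univ:
  fixes Rel :: "nat \<Rightarrow> 'a list \<Rightarrow> bool" and cl :: "'a set \<Rightarrow> 'a set"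
  assumes "zariski_like Rel cl CC"
  shows "infinite (UNIV :: 'a set)"
proof
  assume f: "finite (UNIV :: 'a set)"
  have q: "quasiminimal_pregeometry_structure Rel cl"
    using assms unfolding zariski_like_def by (elim conjE) assumption
  have p: "pregeometry cl" using q unfolding quasiminimal_pregeometry_structure_def
    by (elim conjE) assumption
  have ni: "\<not> (\<exists>X. finite X \<and> cl X = UNIV)" using q unfolding quasiminimal_pregeometry_structure_def
    by (elim conjE) assumption
  have "\<forall>A. A \<subseteq> cl A" using p unfolding pregeometry_def by (elim conjE) assumption
  hence "cl (UNIV::'a set) = UNIV" by blast
  with f ni show False by blast
qed

theorem lemma5p8:
  fixes Rel :: "nat \<Rightarrow> 'a list \<Rightarrow> bool" and cl :: "'a set \<Rightarrow> 'a set"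
    and CC :: "'a list set set" and a b :: "'a list"
  assumes "zariski_like Rel cl CC"
    and "spec_list CC a b"
    and "1 < length a"
    and "a ! 0 \<noteq> a ! 1"
    and "b ! 0 = b ! 1"
  shows "\<exists>c. spec_list CC a c \<and> spec_list CC c b \<and> rk cl a c \<le> 1 \<and> c ! 0 = c ! 1"
proof -
  obtain e :: "nat \<Rightarrow> 'a" where e: "inj e"
    using inf_univ[OF assms(1)] infinite_countable_subset by blast
  define n where "n = length a"
  have lb: "length b = n" using assms(2) unfolding spec_list_def n_def by simp
  define I where "I = e ` {..<n}"
  define f where "f = (\<lambda>x. a ! inv e x)"
  define g where "g = (\<lambda>x. b ! inv e x)"
  have ie: "\<And>i. inv e (e i) = i" using e by simp
  have ax9: "\<forall>(I :: 'a set) i0 i1 (f :: 'a \<Rightarrow> 'a) g S.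
        i0 \<in> I \<and> i1 \<in> I \<and> spec CC I f g \<and> f i0 \<noteq> f i1 \<and> g i0 = g i1 \<and>
        S \<subseteq> {X. X \<subseteq> I \<and> finite X} \<and>
        (\<forall>X. X \<subseteq> I \<and> finite X \<longrightarrow> (\<exists>Y\<in>S. X \<subseteq> Y)) \<and>
        (\<forall>X\<in>S. \<forall>Y\<in>S. \<exists>Z\<in>S. X \<union> Y \<subseteq> Z) \<and>
        (\<forall>X\<in>S. i0 \<in> X \<and> i1 \<in> X) \<and>
        (\<forall>X\<in>S. \<forall>Y\<in>S. X \<subseteq> Y \<longrightarrow>
           (\<forall>h. h i0 = h i1 \<and> spec CC Y f h \<and> spec CC Y h g \<and> rk_fam cl Y f h \<le> 1
                \<longrightarrow> rk_fam cl X f h \<le> 1))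
        \<longrightarrow> (\<exists>h. spec CC I f h \<and> spec CC I h g \<and> h i0 = h i1 \<and>
                 (\<forall>X\<in>S. rk_fam cl X f h \<le> 1))"
    using assms(1) unfolding zariski_like_def by (elim conjE) assumption
  have specfg: "spec CC I f g"
    unfolding spec_def
  proof (intro ballI allI impI)
    fix D js assume D: "D \<in> CC" and js: "set js \<subseteq> I" and m: "map f js \<in> D"
    define ks where "ks = map (inv e) js"
    have ks: "set ks \<subseteq> {..<n}" using js ie unfolding ks_def I_def by auto
    have e1: "map f js = map ((!) a) ks" unfolding ks_def f_def by simp
    have e2: "map g js = map ((!) b) ks" unfolding ks_def g_def by simp
    have sp: "\<forall>D\<in>CC. \<forall>is. set is \<subseteq> {..<n} \<longrightarrow> map ((!) a) is \<in> D \<longrightarrow> map ((!) b) is \<in> D"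
      using assms(2) unfolding spec_list_def spec_def n_def by simp
    show "map g js \<in> D" using sp D ks m e1 e2 by simp
  qed
  have n1: "0 < n" "1 < n" using assms(3) n_def by auto
  have "\<exists>h. spec CC I f h \<and> spec CC I h g \<and> h (e 0) = h (e 1) \<and>
                 (\<forall>X\<in>{I}. rk_fam cl X f h \<le> 1)"
    apply (rule ax9[rule_format, of "e 0" I "e 1" f g "{I}"])
    apply (intro conjI)
    using n1 specfg assms(4,5) by (auto simp: I_def f_def g_def ie)
  then obtain h where h: "spec CC I f h" "spec CC I h g" "h (e 0) = h (e 1)"
    "rk_fam cl I f h \<le> 1" by blast
  define c where "c = map (h \<circ> e) [0..<n]"
  have lc: "length c = n" unfolding c_def by simp
  have cn: "\<And>i. i < n \<Longrightarrow> c ! i = h (e i)" unfolding c_def by simp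
  have an: "\<And>i. a ! i = f (e i)" unfolding f_def ie by simp
  have bn: "\<And>i. b ! i = g (e i)" unfolding g_def ie by simp
  have mapc: "\<And>ks. set ks \<subseteq> {..<n} \<Longrightarrow> map ((!) c) ks = map h (map e ks)"
    using cn by auto
  have mapa: "\<And>ks. map ((!) a) ks = map f (map e ks)" using an by auto
  have mapb: "\<And>ks. map ((!) b) ks = map g (map e ks)" using bn by auto
  have sub: "\<And>ks. set ks \<subseteq> {..<n} \<Longrightarrow> set (map e ks) \<subseteq> I" unfolding I_def by auto
  have s1: "spec_list CC a c" unfolding spec_list_def spec_def
  proof (intro conjI ballI allI impI)
    show "length a = length c" using lc n_def by simp
    fix D ks assume D: "D \<in> CC" and ks: "set ks \<subseteq> {..<length a}" and m: "map ((!) a) ks \<in> D"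
    have ks': "set ks \<subseteq> {..<n}" using ks n_def by simp
    have "map f (map e ks) \<in> D" using m by (simp only: mapa)
    hence "map h (map e ks) \<in> D" using h(1) D sub[OF ks'] unfolding spec_def by blast
    thus "map ((!) c) ks \<in> D" by (simp only: mapc[OF ks'])
  qed
  have s2: "spec_list CC c b" unfolding spec_list_def spec_def
  proof (intro conjI ballI allI impI)
    show "length c = length b" using lc lb by simp
    fix D ks assume D: "D \<in> CC" and ks: "set ks \<subseteq> {..<length c}" and m: "map ((!) c) ks \<in> D"
    have ks': "set ks \<subseteq> {..<n}" using ks lc by simp
    have "map h (map e ks) \<in> D" using m by (simp only: mapc[OF ks'])
    hence "map g (map e ks) \<in> D" using h(2) D sub[OF ks'] unfolding spec_def by blast
    thus "map ((!) b) ks \<in> D" by (simp only: mapb)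
  qed
  have sa: "set a = f ` I" unfolding I_def using an
    by (auto simp: n_def in_set_conv_nth image_iff)
  have sc: "set c = h ` I" unfolding I_def c_def by (simp add: image_comp atLeast0LessThan)
  have "rk cl a c \<le> 1" using h(4) unfolding rk_def rk_fam_def dimt_def sa sc .
  moreover have "c ! 0 = c ! 1" using cn n1 h(3) by simp
  ultimately show ?thesis using s1 s2 by blast
qed

end
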